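(* Let $K$ be a finite field, $G$ a finite group and $C$ a two-sided ideal of $KG$ such that the quotient algebra $KG/C$ is a Frobenius algebra. Then $C$ is checkable (as a right ideal). In particular the Jacobson radical $J(KG)$ is checkable.
   Context: A right ideal $I\le KG$ is called checkable if there is $v\in KG$ with $I=\{a\in KG: va=0\}$. A Frobenius algebra is a finite-dimensional $K$-algebra $A$ admitting a $K$-linear map $\lambda:A\to K$ whose kernel contains no nonzero left or right ideal. *)

theory Defs
  imports "HOL-Algebra.Group"
begin

text \<open>The group algebra KG of a finite group G over a field K: K-valued functions
  on the carrier of G, vanishing outside the carrier, with convolution product.\<close>

definition ga_carrier :: "('g, 'b) monoid_scheme \<Rightarrow> ('g \<Rightarrow> 'k::field) set" where
  "ga_carrier G = {a. \<forall>x. x \<notin> carrier G \<longrightarrow> a x = 0}"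

definition ga_mult :: "('g, 'b) monoid_scheme \<Rightarrow> ('g \<Rightarrow> 'k::field) \<Rightarrow> ('g \<Rightarrow> 'k) \<Rightarrow> ('g \<Rightarrow> 'k)" where
  "ga_mult G a b = (\<lambda>g. if g \<in> carrier G
       then (\<Sum>h\<in>carrier G. a h * b (inv\<^bsub>G\<^esub> h \<otimes>\<^bsub>G\<^esub> g)) else 0)"

definition ga_additive_subgroup :: "('g, 'b) monoid_scheme \<Rightarrow> ('g \<Rightarrow> 'k::field) set \<Rightarrow> bool" where
  "ga_additive_subgroup G I \<longleftrightarrow> I \<subseteq> ga_carrier G \<and> (\<lambda>_. 0) \<in> I \<and>
     (\<forall>a\<in>I. \<forall>b\<in>I. (\<lambda>g. a g + b g) \<in> I) \<and> (\<forall>a\<in>I. (\<lambda>g. - a g) \<in> I)"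

definition ga_right_ideal :: "('g, 'b) monoid_scheme \<Rightarrow> ('g \<Rightarrow> 'k::field) set \<Rightarrow> bool" where
  "ga_right_ideal G I \<longleftrightarrow> ga_additive_subgroup G I \<and>
     (\<forall>a\<in>I. \<forall>x\<in>ga_carrier G. ga_mult G a x \<in> I)"

definition ga_left_ideal :: "('g, 'b) monoid_scheme \<Rightarrow> ('g \<Rightarrow> 'k::field) set \<Rightarrow> bool" where
  "ga_left_ideal G I \<longleftrightarrow> ga_additive_subgroup G I \<and>
     (\<forall>a\<in>I. \<forall>x\<in>ga_carrier G. ga_mult G x a \<in> I)"

definition ga_ideal :: "('g, 'b) monoid_scheme \<Rightarrow> ('g \<Rightarrow> 'k::field) set \<Rightarrow> bool" where
  "ga_ideal G I \<longleftrightarrow> ga_left_ideal G I \<and> ga_right_ideal G I"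

definition checkable :: "('g, 'b) monoid_scheme \<Rightarrow> ('g \<Rightarrow> 'k::field) set \<Rightarrow> bool" where
  "checkable G I \<longleftrightarrow> (\<exists>v\<in>ga_carrier G. I = {a\<in>ga_carrier G. ga_mult G v a = (\<lambda>_. 0)})"

definition ga_linear :: "('g, 'b) monoid_scheme \<Rightarrow> (('g \<Rightarrow> 'k::field) \<Rightarrow> 'k) \<Rightarrow> bool" where
  "ga_linear G l \<longleftrightarrow> (\<forall>a\<in>ga_carrier G. \<forall>b\<in>ga_carrier G. l (\<lambda>g. a g + b g) = l a + l b) \<and>
     (\<forall>c. \<forall>a\<in>ga_carrier G. l (\<lambda>g. c * a g) = c * l a)"

text \<open>K-linear maps KG/C \<rightarrow> K are exactly the K-linear maps
  KG \<rightarrow> K vanishing on C, and (correspondence theorem) the left/right ideals of KG/C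
  are exactly L/C for left/right ideals L of KG containing C; L/C is nonzero iff L \<noteq> C,
  and L/C lies in the kernel iff the functional vanishes on L.  (KG/C is automatically
  finite-dimensional.)\<close>
definition frobenius_quotient :: "('g, 'b) monoid_scheme \<Rightarrow> ('g \<Rightarrow> 'k::field) set \<Rightarrow> bool" where
  "frobenius_quotient G C \<longleftrightarrow> (\<exists>l. ga_linear G l \<and> (\<forall>c\<in>C. l c = 0) \<and>
     (\<forall>L. ga_left_ideal G L \<and> C \<subseteq> L \<and> (\<forall>a\<in>L. l a = 0) \<longrightarrow> L = C) \<and>
     (\<forall>L. ga_right_ideal G L \<and> C \<subseteq> L \<and> (\<forall>a\<in>L. l a = 0) \<longrightarrow> L = C))"

definition ga_maximal_right_ideal :: "('g, 'b) monoid_scheme \<Rightarrow> ('g \<Rightarrow> 'k::field) set \<Rightarrow> bool" where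
  "ga_maximal_right_ideal G M \<longleftrightarrow> ga_right_ideal G M \<and> M \<noteq> ga_carrier G \<and>
     (\<forall>N. ga_right_ideal G N \<and> M \<subseteq> N \<longrightarrow> N = M \<or> N = ga_carrier G)"

definition ga_jacobson :: "('g, 'b) monoid_scheme \<Rightarrow> ('g \<Rightarrow> 'k::field) set" where
  "ga_jacobson G = ga_carrier G \<inter> \<Inter>{M. ga_maximal_right_ideal G M}"

end

theory Submission
  imports Defs "HOL-Library.Function_Algebras" "HOL.Vector_Spaces"
begin

definition fsc :: "'k::field \<Rightarrow> ('g \<Rightarrow> 'k) \<Rightarrow> ('g \<Rightarrow> 'k)" where
  "fsc c f = (\<lambda>x. c * f x)"

lemma vs_fsc: "vector_space (fsc :: 'k::field \<Rightarrow> ('g \<Rightarrow> 'k) \<Rightarrow> _)"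
  by unfold_locales (auto simp: fsc_def fun_eq_iff algebra_simps)

lemma vs_self: "vector_space ((*) :: 'k::field \<Rightarrow> 'k \<Rightarrow> 'k)"
  by unfold_locales (auto simp: algebra_simps)

lemma functional_exists:
  fixes J :: "('g \<Rightarrow> 'k::field) set"
  assumes "0 \<in> J" "\<forall>x\<in>J. \<forall>y\<in>J. x+y \<in> J" "\<forall>c. \<forall>x\<in>J. fsc c x \<in> J" "e \<notin> J"
  shows "\<exists>lam. (\<forall>x y. lam (x+y) = lam x + lam y) \<and> (\<forall>c x. lam (fsc c x) = c * lam x)
     \<and> (\<forall>x\<in>J. lam x = 0) \<and> lam e = 1"
proof -
  interpret V: vector_space "fsc :: 'k::field \<Rightarrow> ('g \<Rightarrow> 'k) \<Rightarrow> _" by (rule vs_fsc)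
  interpret W: vector_space "(*) :: 'k \<Rightarrow> 'k \<Rightarrow> 'k" by (rule vs_self)
  have vsp: "vector_space_pair (fsc :: 'k::field \<Rightarrow> ('g \<Rightarrow> 'k) \<Rightarrow> _) ((*) :: 'k \<Rightarrow> 'k \<Rightarrow> 'k)"
    by (simp add: vector_space_pair_def vs_fsc vs_self)
  have sJ: "V.subspace J" using assms unfolding V.subspace_def by auto
  obtain B where B: "B \<subseteq> J" "V.independent B" "J \<subseteq> V.span B"
    using V.maximal_independent_subset by blast
  have spB: "V.span B = J" using B sJ V.span_minimal by blast
  have eB: "e \<notin> V.span B" using spB assms(4) by simp
  have ind: "V.independent (insert e B)" using V.independent_insertI[OF eB B(2)] .
  obtain g where g: "Vector_Spaces.linear fsc (*) g" "\<forall>x\<in>insert e B. g x = (if x = e then 1 else 0)"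
    using vector_space_pair.linear_independent_extend[OF vsp ind, of "\<lambda>x. if x = e then 1 else 0"] by blast
  interpret L: module_hom fsc "(*) :: 'k \<Rightarrow> 'k \<Rightarrow> 'k" g using g(1) by (simp add: linear_iff_module_hom)
  have "\<forall>x\<in>V.span B. g x = 0"
  proof
    fix x assume "x \<in> V.span B"
    then show "g x = 0"
    proof (induction rule: V.span_induct_alt)
      case base then show ?case using L.zero by (simp add: zero_fun_def)
    next
      case (step c y z) 
      have "y \<noteq> e" using step eB V.span_superset by blast
      then show ?case using step g(2) by (simp only: L.add L.scale) simp
    qed
  qed
  then show ?thesis using L.add L.scale g(2) spB by auto
qed

locale GA = group +
  assumes fin: "finite (carrier G)"
begin

abbreviation gm :: "('a \<Rightarrow> 'k::field) \<Rightarrow> ('a \<Rightarrow> 'k) \<Rightarrow> ('a \<Rightarrow> 'k)" (infixl "\<star>" 70)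
  where "a \<star> b \<equiv> ga_mult G a b"

definition e1 :: "'a \<Rightarrow> 'k::field" where "e1 = (\<lambda>x. if x = \<one> then 1 else 0)"
definition dl :: "'a \<Rightarrow> 'a \<Rightarrow> 'k::field" where "dl k = (\<lambda>x. if x = k then 1 else 0)"

lemma mult_apply: "g \<in> carrier G \<Longrightarrow> (a \<star> b) g = (\<Sum>h\<in>carrier G. a h * b (inv h \<otimes> g))"
  by (simp add: ga_mult_def)
lemma mult_out: "g \<notin> carrier G \<Longrightarrow> (a \<star> b) g = 0"
  by (simp add: ga_mult_def)
lemma mult_carrier[simp]: "a \<star> b \<in> ga_carrier G"
  by (simp add: ga_carrier_def mult_out)

lemma add_left: "(a + b) \<star> c = a \<star> c + b \<star> c"
  by (auto simp: fun_eq_iff ga_mult_def sum.distrib distrib_right)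
lemma add_right: "c \<star> (a + b) = c \<star> a + c \<star> b"
  by (auto simp: fun_eq_iff ga_mult_def sum.distrib distrib_left)
lemma zero_left[simp]: "0 \<star> b = 0"
  by (auto simp: fun_eq_iff ga_mult_def)
lemma zero_right[simp]: "b \<star> 0 = 0"
  by (auto simp: fun_eq_iff ga_mult_def)
lemma minus_left: "(- a) \<star> b = - (a \<star> b)"
  by (auto simp: fun_eq_iff ga_mult_def sum_negf)
lemma minus_right: "b \<star> (- a) = - (b \<star> a)"
  by (auto simp: fun_eq_iff ga_mult_def sum_negf)
lemma diff_left: "(a - c) \<star> b = a \<star> b - c \<star> b"
  by (metis add_left diff_conv_add_uminus minus_left)
lemma diff_right: "b \<star> (a - c) = b \<star> a - b \<star> c"
  by (metis add_right diff_conv_add_uminus minus_right)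
lemma fsc_left: "fsc c a \<star> b = fsc c (a \<star> b)"
  by (auto simp: fun_eq_iff ga_mult_def fsc_def sum_distrib_left mult.assoc)
lemma fsc_right: "b \<star> fsc c a = fsc c (b \<star> a)"
  by (auto simp: fun_eq_iff ga_mult_def fsc_def sum_distrib_left algebra_simps)
lemma sum_left: "(\<Sum>i\<in>S. f i) \<star> b = (\<Sum>i\<in>S. f i \<star> b)"
  apply (induction S rule: infinite_finite_induct)
    apply (simp add: ga_mult_def fun_eq_iff)
   apply (simp add: ga_mult_def fun_eq_iff)
  subgoal for x F
  proof -
    assume h: "finite F" "x \<notin> F" "sum f F \<star> b = (\<Sum>i\<in>F. f i \<star> b)"
    have "sum f (insert x F) \<star> b = (f x + sum f F) \<star> b" using h(1,2) by (metis sum.insert)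
    also have "\<dots> = f x \<star> b + sum f F \<star> b" by (rule add_left)
    also have "\<dots> = (\<Sum>i\<in>insert x F. f i \<star> b)" using h by (metis sum.insert)
    finally show ?thesis .
  qed
  done
lemma sum_right: "b \<star> (\<Sum>i\<in>S. f i) = (\<Sum>i\<in>S. b \<star> f i)"
  apply (induction S rule: infinite_finite_induct)
    apply (simp add: ga_mult_def fun_eq_iff)
   apply (simp add: ga_mult_def fun_eq_iff)
  subgoal for x F
  proof -
    assume h: "finite F" "x \<notin> F" "b \<star> sum f F = (\<Sum>i\<in>F. b \<star> f i)"
    have "b \<star> sum f (insert x F) = b \<star> (f x + sum f F)" using h(1,2) by (metis sum.insert)
    also have "\<dots> = b \<star> f x + b \<star> sum f F" by (rule add_right)
    also have "\<dots> = (\<Sum>i\<in>insert x F. b \<star> f i)" using h by (metis sum.insert)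
    finally show ?thesis .
  qed
  done

lemma grp1: "k \<in> carrier G \<Longrightarrow> m \<in> carrier G \<Longrightarrow> inv k \<otimes> (k \<otimes> m) = m"
  by (metis l_inv l_one m_assoc inv_closed)
lemma grp2: "k \<in> carrier G \<Longrightarrow> m \<in> carrier G \<Longrightarrow> k \<otimes> (inv k \<otimes> m) = m"
  by (metis r_inv l_one m_assoc inv_closed)
lemma grp3: "k \<in> carrier G \<Longrightarrow> m \<in> carrier G \<Longrightarrow> g \<in> carrier G \<Longrightarrow> inv (k \<otimes> m) \<otimes> g = inv m \<otimes> (inv k \<otimes> g)"
  by (simp add: inv_mult_group m_assoc)

lemma sum_delta_G: "x \<in> carrier G \<Longrightarrow> (\<Sum>h\<in>carrier G. if h = x then f h else 0) = f x"
  using fin by simp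

lemma assoc[simp]: "(a \<star> b) \<star> c = a \<star> (b \<star> c)"
proof (rule ext)
  fix g
  show "((a \<star> b) \<star> c) g = (a \<star> (b \<star> c)) g"
  proof (cases "g \<in> carrier G")
    case False then show ?thesis by (simp add: mult_out)
  next
    case True
    have "((a \<star> b) \<star> c) g = (\<Sum>h\<in>carrier G. (\<Sum>k\<in>carrier G. a k * b (inv k \<otimes> h)) * c (inv h \<otimes> g))"
      using True by (simp add: mult_apply)
    also have "\<dots> = (\<Sum>k\<in>carrier G. \<Sum>h\<in>carrier G. a k * (b (inv k \<otimes> h) * c (inv h \<otimes> g)))"
      by (simp add: sum_distrib_right mult.assoc) (rule sum.swap)
    also have "\<dots> = (\<Sum>k\<in>carrier G. a k * (\<Sum>m\<in>carrier G. b m * c (inv m \<otimes> (inv k \<otimes> g))))"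
    proof (rule sum.cong[OF refl])
      fix k assume k: "k \<in> carrier G"
      have "(\<Sum>h\<in>carrier G. b (inv k \<otimes> h) * c (inv h \<otimes> g)) = (\<Sum>m\<in>carrier G. b m * c (inv m \<otimes> (inv k \<otimes> g)))"
        by (rule sum.reindex_bij_witness[where i="\<lambda>m. k \<otimes> m" and j="\<lambda>h. inv k \<otimes> h"])
           (use k True in \<open>auto simp: grp1 grp2 grp3\<close>)
      then show "(\<Sum>h\<in>carrier G. a k * (b (inv k \<otimes> h) * c (inv h \<otimes> g))) = a k * (\<Sum>m\<in>carrier G. b m * c (inv m \<otimes> (inv k \<otimes> g)))"
        by (subst sum_distrib_left[symmetric]) (simp only: )
    qed
    also have "\<dots> = (a \<star> (b \<star> c)) g"
      using True by (simp add: mult_apply)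
    finally show ?thesis .
  qed
qed

lemma e1_left: "a \<in> ga_carrier G \<Longrightarrow> e1 \<star> a = a"
proof (rule ext)
  fix g assume a: "a \<in> ga_carrier G"
  show "(e1 \<star> a) g = a g"
  proof (cases "g \<in> carrier G")
    case False then show ?thesis using a by (simp add: mult_out ga_carrier_def)
  next
    case True
    have "(e1 \<star> a) g = (\<Sum>h\<in>carrier G. if h = \<one> then a (inv h \<otimes> g) else 0)"
      unfolding mult_apply[OF True] e1_def
      by (rule sum.cong) auto
    then show ?thesis using True sum_delta_G[of \<one> "\<lambda>h. a (inv h \<otimes> g)"] by simp
  qed
qed

lemma e1_right: "a \<in> ga_carrier G \<Longrightarrow> a \<star> e1 = a"
proof (rule ext)
  fix g assume a: "a \<in> ga_carrier G"
  show "(a \<star> e1) g = a g"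
  proof (cases "g \<in> carrier G")
    case False then show ?thesis using a by (simp add: mult_out ga_carrier_def)
  next
    case True
    have "(a \<star> e1) g = (\<Sum>h\<in>carrier G. if h = g then a h else 0)"
      unfolding mult_apply[OF True] e1_def
      by (rule sum.cong) (use True in \<open>auto simp: inv_solve_left'\<close>)
    then show ?thesis using True sum_delta_G[of g a] by simp
  qed
qed

end

context GA begin

lemma sum_apply: "(\<Sum>k\<in>S. f k) x = (\<Sum>k\<in>S. f k x)"
  by (induction S rule: infinite_finite_induct) auto

lemma carr_add[intro]: "a \<in> ga_carrier G \<Longrightarrow> b \<in> ga_carrier G \<Longrightarrow> a + b \<in> ga_carrier G"
  by (simp add: ga_carrier_def)
lemma carr_minus[intro]: "a \<in> ga_carrier G \<Longrightarrow> - a \<in> ga_carrier G"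
  by (simp add: ga_carrier_def)
lemma carr_diff[intro]: "a \<in> ga_carrier G \<Longrightarrow> b \<in> ga_carrier G \<Longrightarrow> a - b \<in> ga_carrier G"
  by (simp add: ga_carrier_def)
lemma carr_zero[intro, simp]: "0 \<in> ga_carrier G"
  by (simp add: ga_carrier_def)
lemma carr_fsc[intro]: "a \<in> ga_carrier G \<Longrightarrow> fsc c a \<in> ga_carrier G"
  by (simp add: ga_carrier_def fsc_def)
lemma carr_sum[intro]: "(\<And>i. i \<in> S \<Longrightarrow> f i \<in> ga_carrier G) \<Longrightarrow> (\<Sum>i\<in>S. f i) \<in> ga_carrier G"
  by (induction S rule: infinite_finite_induct) (auto simp: ga_carrier_def)
lemma carr_dl[intro]: "k \<in> carrier G \<Longrightarrow> dl k \<in> ga_carrier G"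
  by (auto simp: ga_carrier_def dl_def)
lemma e1_dl: "e1 = dl \<one>"
  by (simp add: e1_def dl_def)
lemma carr_e1[intro, simp]: "e1 \<in> ga_carrier G"
  by (auto simp: e1_dl)

lemma mult_dl: "x \<in> carrier G \<Longrightarrow> g \<in> carrier G \<Longrightarrow> (a \<star> dl (inv g)) x = a (x \<otimes> g)"
proof -
  assume x: "x \<in> carrier G" and g: "g \<in> carrier G"
  have "(a \<star> dl (inv g)) x = (\<Sum>h\<in>carrier G. if h = x \<otimes> g then a h else 0)"
    unfolding mult_apply[OF x] dl_def
  proof (rule sum.cong[OF refl])
    fix h assume h: "h \<in> carrier G"
    have "inv h \<otimes> x = inv g \<longleftrightarrow> h = x \<otimes> g"
    proof -
      have "inv h \<otimes> x = inv g \<longleftrightarrow> x = h \<otimes> inv g"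
        using inv_solve_left'[of "inv g" h x] h x g by blast
      also have "\<dots> \<longleftrightarrow> h = x \<otimes> g"
        using inv_solve_right[of x h g] h x g by blast
      finally show ?thesis .
    qed
    then show "a h * (if inv h \<otimes> x = inv g then 1 else 0) = (if h = x \<otimes> g then a h else 0)"
      by simp
  qed
  also have "\<dots> = a (x \<otimes> g)" using sum_delta_G[of "x \<otimes> g" a] x g by simp
  finally show ?thesis .
qed

lemma expand: "y \<in> ga_carrier G \<Longrightarrow> y = (\<Sum>k\<in>carrier G. fsc (y k) (dl k))"
proof (rule ext)
  fix x assume y: "y \<in> ga_carrier G"
  have "(\<Sum>k\<in>carrier G. fsc (y k) (dl k)) x = (\<Sum>k\<in>carrier G. fsc (y k) (dl k) x)"
    by (rule sum_apply)
  also have "\<dots> = (\<Sum>k\<in>carrier G. if k = x then y k else 0)"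
    by (rule sum.cong) (auto simp: fsc_def dl_def)
  also have "\<dots> = y x" using y fin by (auto simp: ga_carrier_def)
  finally show "y x = (\<Sum>k\<in>carrier G. fsc (y k) (dl k)) x" by simp
qed

lemma lin_zero:
  fixes l :: "('a \<Rightarrow> 'k::field) \<Rightarrow> 'k"
  shows "ga_linear G l \<Longrightarrow> l 0 = 0"
proof -
  assume "ga_linear G l"
  then have h: "\<forall>c. \<forall>a\<in>ga_carrier G. l (\<lambda>g. c * a g) = c * l a" unfolding ga_linear_def by (rule conjunct2)
  have "l (\<lambda>g. 0 * (0::'a\<Rightarrow>'k) g) = 0 * l 0" using h carr_zero by blast
  then show "l 0 = 0" by (simp add: zero_fun_def)
qed

lemma lin_add: "ga_linear G l \<Longrightarrow> a \<in> ga_carrier G \<Longrightarrow> b \<in> ga_carrier G \<Longrightarrow> l (a + b) = l a + l b"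
proof -
  assume "ga_linear G l" "a \<in> ga_carrier G" "b \<in> ga_carrier G"
  then show ?thesis unfolding ga_linear_def plus_fun_def by (elim conjE) (drule bspec, assumption, drule bspec, assumption)
qed
lemma lin_fsc: "ga_linear G l \<Longrightarrow> a \<in> ga_carrier G \<Longrightarrow> l (fsc c a) = c * l a"
proof -
  assume "ga_linear G l" "a \<in> ga_carrier G"
  then show ?thesis unfolding ga_linear_def fsc_def by (elim conjE) (drule spec, drule bspec, assumption)
qed

lemma lin_sum: "ga_linear G l \<Longrightarrow> S \<subseteq> carrier G \<Longrightarrow>
   l (\<Sum>k\<in>S. fsc (c k) (dl k)) = (\<Sum>k\<in>S. c k * l (dl k))"
proof (induction S rule: infinite_finite_induct)
  case (infinite A)
  then show ?case using lin_zero by (simp add: zero_fun_def)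
next
  case empty
  then show ?case using lin_zero by (simp add: zero_fun_def)
next
  case (insert x F)
  have "l (\<Sum>k\<in>insert x F. fsc (c k) (dl k)) = l (fsc (c x) (dl x) + (\<Sum>k\<in>F. fsc (c k) (dl k)))"
    by (simp only: sum.insert[OF insert(1,2)])
  also have "\<dots> = l (fsc (c x) (dl x)) + l (\<Sum>k\<in>F. fsc (c k) (dl k))"
  proof (rule lin_add[OF insert.prems(1)])
    show "fsc (c x) (dl x) \<in> ga_carrier G" using insert.prems(2) by (intro carr_fsc carr_dl) simp
    show "(\<Sum>k\<in>F. fsc (c k) (dl k)) \<in> ga_carrier G" using insert.prems(2)
      by (intro carr_sum carr_fsc carr_dl) auto
  qed
  also have "\<dots> = c x * l (dl x) + (\<Sum>k\<in>F. c k * l (dl k))"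
  proof -
    have "l (fsc (c x) (dl x)) = c x * l (dl x)"
      using insert.prems by (intro lin_fsc carr_dl) auto
    moreover have "l (\<Sum>k\<in>F. fsc (c k) (dl k)) = (\<Sum>k\<in>F. c k * l (dl k))"
      using insert.prems insert.IH by blast
    ultimately show ?thesis by simp
  qed
  finally show ?case by (simp only: sum.insert[OF insert(1,2)])
qed

lemma lin_expand: "ga_linear G l \<Longrightarrow> y \<in> ga_carrier G \<Longrightarrow> l y = (\<Sum>k\<in>carrier G. y k * l (dl k))"
proof -
  assume l: "ga_linear G l" and y: "y \<in> ga_carrier G"
  from expand[OF y] have "l y = l (\<Sum>k\<in>carrier G. fsc (y k) (dl k))" by (rule arg_cong)
  also have "\<dots> = (\<Sum>k\<in>carrier G. y k * l (dl k))" by (rule lin_sum[OF l subset_refl])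
  finally show ?thesis .
qed

definition rid :: "('a \<Rightarrow> 'k::field) set \<Rightarrow> bool" where
  "rid I \<longleftrightarrow> I \<subseteq> ga_carrier G \<and> 0 \<in> I \<and> (\<forall>a\<in>I. \<forall>b\<in>I. a + b \<in> I) \<and> (\<forall>a\<in>I. - a \<in> I)
     \<and> (\<forall>a\<in>I. \<forall>x\<in>ga_carrier G. a \<star> x \<in> I)"

lemma rid_iff:
  fixes I :: "('a \<Rightarrow> 'k::field) set"
  shows "ga_right_ideal G I \<longleftrightarrow> rid I"
proof -
  have e1: "\<And>a b::'a \<Rightarrow> 'k. (\<lambda>g. a g + b g) = a + b" by (simp add: plus_fun_def)
  have e2: "\<And>a::'a \<Rightarrow> 'k. (\<lambda>g. - a g) = - a" by (simp add: fun_Compl_def)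
  have e3: "(\<lambda>_::'a. 0::'k) = 0" by (simp add: zero_fun_def)
  have "ga_right_ideal G I = ((I \<subseteq> ga_carrier G \<and> 0 \<in> I \<and> (\<forall>a\<in>I. \<forall>b\<in>I. a + b \<in> I) \<and> (\<forall>a\<in>I. - a \<in> I))
     \<and> (\<forall>a\<in>I. \<forall>x\<in>ga_carrier G. a \<star> x \<in> I))"
    unfolding ga_right_ideal_def ga_additive_subgroup_def e1 e2 e3 by (rule refl)
  then show ?thesis unfolding rid_def by (simp only: conj_assoc)
qed

lemma checkable_of:
  fixes C :: "('a \<Rightarrow> 'k::field) set"
  assumes C: "rid C" and l: "ga_linear G l" and lC: "\<forall>c\<in>C. l c = 0"
    and frob: "\<forall>L. rid L \<and> C \<subseteq> L \<and> (\<forall>a\<in>L. l a = 0) \<longrightarrow> L = C"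
  shows "checkable G C"
proof -
  define u where "u = (\<lambda>g. if g \<in> carrier G then l (dl (inv g)) else 0)"
  have u: "u \<in> ga_carrier G" by (simp add: u_def ga_carrier_def)
  have key: "(u \<star> a) g = l (a \<star> dl (inv g))" if a: "a \<in> ga_carrier G" and g: "g \<in> carrier G" for a g
  proof -
    have "(u \<star> a) g = (\<Sum>h\<in>carrier G. l (dl (inv h)) * a (inv h \<otimes> g))"
      unfolding mult_apply[OF g] by (rule sum.cong) (auto simp: u_def)
    also have "\<dots> = (\<Sum>k\<in>carrier G. l (dl k) * a (k \<otimes> g))"
      by (rule sum.reindex_bij_witness[where i="\<lambda>k. inv k" and j="\<lambda>k. inv k"]) auto
    also have "\<dots> = (\<Sum>k\<in>carrier G. (a \<star> dl (inv g)) k * l (dl k))"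
      by (rule sum.cong) (auto simp: mult_dl g)
    also have "\<dots> = l (a \<star> dl (inv g))" using lin_expand[OF l, of "a \<star> dl (inv g)"] by simp
    finally show ?thesis .
  qed
  define L where "L = {y \<in> ga_carrier G. u \<star> y = 0}"
  have CL: "C \<subseteq> L"
  proof
    fix a assume aC: "a \<in> C"
    have a: "a \<in> ga_carrier G" using C aC by (auto simp: rid_def)
    have "u \<star> a = 0"
    proof (rule ext)
      fix g show "(u \<star> a) g = 0 g"
      proof (cases "g \<in> carrier G")
        case True
        have "dl (inv g) \<in> ga_carrier G" using True by (simp add: carr_dl)
        then have "a \<star> dl (inv g) \<in> C" using C aC by (auto simp: rid_def)
        then show ?thesis using key[OF a True] lC by simp
      qed (simp add: mult_out)
    qed
    then show "a \<in> L" using a by (simp add: L_def)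
  qed
  have Lr: "rid L"
  proof -
    have "u \<star> (a \<star> x) = 0" if "u \<star> a = 0" for a x :: "'a \<Rightarrow> 'k"
      by (subst assoc[symmetric]) (simp add: that)
    then show ?thesis unfolding rid_def L_def
      by (auto simp: add_right minus_right)
  qed
  have lL: "\<forall>a\<in>L. l a = 0"
  proof
    fix a assume "a \<in> L"
    then have a: "a \<in> ga_carrier G" and ua: "u \<star> a = 0" by (auto simp: L_def)
    have "a \<star> dl (inv \<one>) = a" using a e1_right by (simp add: e1_dl)
    then show "l a = 0" using key[OF a one_closed] ua by simp
  qed
  have "L = C" using frob Lr CL lL by blast
  then show ?thesis unfolding checkable_def using u by (auto simp: L_def zero_fun_def)
qed

end

context GA begin

lemma rid_sub: "rid I \<Longrightarrow> I \<subseteq> ga_carrier G" by (simp add: rid_def)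
lemma rid_mem: "rid I \<Longrightarrow> a \<in> I \<Longrightarrow> a \<in> ga_carrier G" by (auto simp: rid_def)
lemma rid_zero: "rid I \<Longrightarrow> 0 \<in> I" by (simp add: rid_def)
lemma rid_add: "rid I \<Longrightarrow> a \<in> I \<Longrightarrow> b \<in> I \<Longrightarrow> a + b \<in> I" by (simp add: rid_def)
lemma rid_uminus: "rid I \<Longrightarrow> a \<in> I \<Longrightarrow> - a \<in> I" by (simp add: rid_def)
lemma rid_diff: "rid I \<Longrightarrow> a \<in> I \<Longrightarrow> b \<in> I \<Longrightarrow> a - b \<in> I"
proof -
  assume "rid I" "a \<in> I" "b \<in> I"
  then have "a + (- b) \<in> I" by (intro rid_add rid_uminus)
  then show ?thesis by simp
qed
lemma rid_multA: "rid I \<Longrightarrow> a \<in> I \<Longrightarrow> x \<in> ga_carrier G \<Longrightarrow> a \<star> x \<in> I" by (simp add: rid_def)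
lemma rid_mult: "rid I \<Longrightarrow> a \<in> I \<Longrightarrow> a \<star> x \<in> I"
proof -
  assume I: "rid I" and a: "a \<in> I"
  have ae: "a \<star> e1 = a" by (rule e1_right[OF rid_mem[OF I a]])
  have "a \<star> x = (a \<star> e1) \<star> x" by (simp only: ae)
  also have "\<dots> = a \<star> (e1 \<star> x)" by (rule assoc)
  finally have "a \<star> x = a \<star> (e1 \<star> x)" .
  then show ?thesis using rid_multA[OF I a mult_carrier] by simp
qed
lemma rid_fsc: "rid I \<Longrightarrow> a \<in> I \<Longrightarrow> fsc c a \<in> I"
proof -
  assume I: "rid I" and a: "a \<in> I"
  have ae: "a \<star> e1 = a" by (rule e1_right[OF rid_mem[OF I a]])
  have "a \<star> fsc c e1 = fsc c a" by (simp only: fsc_right ae)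
  then show ?thesis using rid_mult[OF I a, of "fsc c e1"] by simp
qed
lemma rid_sum: "rid I \<Longrightarrow> (\<And>i. i \<in> S \<Longrightarrow> f i \<in> I) \<Longrightarrow> (\<Sum>i\<in>S. f i) \<in> I"
proof (induction S rule: infinite_finite_induct)
  case (infinite A) then show ?case using rid_zero[of I] by (simp add: zero_fun_def)
next
  case empty then show ?case using rid_zero[of I] by (simp add: zero_fun_def)
next
  case (insert x F)
  have "f x \<in> I" "sum f F \<in> I" using insert by auto
  then have "f x + sum f F \<in> I" by (rule rid_add[OF insert.prems(1)])
  then show ?case by (simp only: sum.insert[OF insert(1,2)])
qed

lemma rid_A: "rid (ga_carrier G)"
  unfolding rid_def by auto

lemma rid_inter: "rid I \<Longrightarrow> rid I' \<Longrightarrow> rid (I \<inter> I')"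
  unfolding rid_def by auto

definition ssum :: "('a \<Rightarrow> 'k::field) set \<Rightarrow> ('a \<Rightarrow> 'k) set \<Rightarrow> ('a \<Rightarrow> 'k) set" where
  "ssum I I' = {a + b | a b. a \<in> I \<and> b \<in> I'}"

lemma rid_ssum:
  assumes I: "rid I" and I': "rid I'"
  shows "rid (ssum I I')"
  unfolding rid_def
proof (intro conjI ballI)
  show "ssum I I' \<subseteq> ga_carrier G"
    unfolding ssum_def using rid_mem[OF I] rid_mem[OF I'] by blast
  have "0 + 0 \<in> ssum I I'" unfolding ssum_def using rid_zero[OF I] rid_zero[OF I'] by blast
  then show "0 \<in> ssum I I'" by simp
  fix a assume "a \<in> ssum I I'"
  then obtain a1 a2 where a: "a = a1 + a2" "a1 \<in> I" "a2 \<in> I'" unfolding ssum_def by blast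
  have "-a = (-a1) + (-a2)" using a(1) by simp
  then show "- a \<in> ssum I I'" unfolding ssum_def using rid_uminus[OF I a(2)] rid_uminus[OF I' a(3)] by blast
  {
    fix b assume "b \<in> ssum I I'"
    then obtain b1 b2 where b: "b = b1 + b2" "b1 \<in> I" "b2 \<in> I'" unfolding ssum_def by blast
    have "a + b = (a1 + b1) + (a2 + b2)" using a(1) b(1) by (simp add: algebra_simps)
    then show "a + b \<in> ssum I I'" unfolding ssum_def using rid_add[OF I a(2) b(2)] rid_add[OF I' a(3) b(3)] by blast
  }
  {
    fix x
    have "a \<star> x = a1 \<star> x + a2 \<star> x" using a(1) by (simp add: add_left)
    then show "a \<star> x \<in> ssum I I'" unfolding ssum_def using rid_mult[OF I a(2)] rid_mult[OF I' a(3)] by blast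
  }
qed

lemma ssum_left: "rid I' \<Longrightarrow> I \<subseteq> ssum I I'"
proof
  fix x assume "rid I'" "x \<in> I"
  moreover have "x = x + 0" by simp
  ultimately show "x \<in> ssum I I'" unfolding ssum_def using rid_zero by blast
qed
lemma ssum_right: "rid I \<Longrightarrow> I' \<subseteq> ssum I I'"
proof
  fix x assume "rid I" "x \<in> I'"
  moreover have "x = 0 + x" by simp
  ultimately show "x \<in> ssum I I'" unfolding ssum_def using rid_zero by blast
qed

definition prin :: "('a \<Rightarrow> 'k::field) \<Rightarrow> ('a \<Rightarrow> 'k) set" where
  "prin y = {y \<star> b | b. b \<in> ga_carrier G}"

lemma rid_prin: "rid (prin y)"
  unfolding rid_def
proof (intro conjI ballI)
  show "prin y \<subseteq> ga_carrier G" unfolding prin_def by auto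
  have "y \<star> 0 \<in> prin y" unfolding prin_def by blast
  then show "0 \<in> prin y" by simp
  fix a assume "a \<in> prin y"
  then obtain a1 where a: "a = y \<star> a1" "a1 \<in> ga_carrier G" unfolding prin_def by blast
  have "-a = y \<star> (-a1)" using a(1) by (simp add: minus_right)
  then show "- a \<in> prin y" unfolding prin_def using carr_minus[OF a(2)] by blast
  {
    fix b assume "b \<in> prin y"
    then obtain b1 where b: "b = y \<star> b1" "b1 \<in> ga_carrier G" unfolding prin_def by blast
    have "a + b = y \<star> (a1 + b1)" using a(1) b(1) by (simp add: add_right)
    then show "a + b \<in> prin y" unfolding prin_def using carr_add[OF a(2) b(2)] by blast
  }
  {
    fix x
    have "a \<star> x = y \<star> (a1 \<star> x)" using a(1) by simp
    then show "a \<star> x \<in> prin y" unfolding prin_def using mult_carrier by blast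
  }
qed

lemma prin_self: "y \<in> ga_carrier G \<Longrightarrow> y \<in> prin y"
proof -
  assume y: "y \<in> ga_carrier G"
  have "y = y \<star> e1" using e1_right[OF y] by simp
  then show ?thesis unfolding prin_def using carr_e1 by blast
qed

end

context GA begin

definition maxr :: "('a \<Rightarrow> 'k::field) set \<Rightarrow> bool" where
  "maxr M \<longleftrightarrow> rid M \<and> M \<noteq> ga_carrier G \<and> (\<forall>N. rid N \<and> M \<subseteq> N \<longrightarrow> N = M \<or> N = ga_carrier G)"

lemma maxr_iff: "ga_maximal_right_ideal G M \<longleftrightarrow> maxr M"
  unfolding ga_maximal_right_ideal_def maxr_def rid_iff ..

lemma J_mem: "x \<in> ga_jacobson G \<longleftrightarrow> x \<in> ga_carrier G \<and> (\<forall>M. maxr M \<longrightarrow> x \<in> M)"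
  unfolding ga_jacobson_def maxr_iff[symmetric] by blast

lemma J_max: "maxr M \<Longrightarrow> ga_jacobson G \<subseteq> M"
  using J_mem by blast

lemma J_rid: "rid (ga_jacobson G :: ('a \<Rightarrow> 'k::field) set)"
  unfolding rid_def
proof (intro conjI ballI)
  show "ga_jacobson G \<subseteq> (ga_carrier G :: ('a \<Rightarrow> 'k) set)" using J_mem by blast
  show "(0::'a\<Rightarrow>'k) \<in> ga_jacobson G" unfolding J_mem maxr_def by (auto intro: rid_zero)
  fix a :: "'a \<Rightarrow> 'k" assume a: "a \<in> ga_jacobson G"
  show "- a \<in> ga_jacobson G" using a unfolding J_mem maxr_def by (auto intro: rid_uminus)
  show "b \<in> ga_jacobson G \<Longrightarrow> a + b \<in> ga_jacobson G" for b
    using a unfolding J_mem maxr_def by (auto intro: rid_add)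
  show "x \<in> ga_carrier G \<Longrightarrow> a \<star> x \<in> ga_jacobson G" for x
    using a unfolding J_mem maxr_def by (auto intro: rid_multA)
qed

lemma J_left_aux:
  fixes a y :: "'a \<Rightarrow> 'k::field"
  assumes a: "a \<in> ga_jacobson G" and y: "y \<in> ga_carrier G" and M: "maxr M"
  shows "y \<star> a \<in> M"
proof -
  have Mr: "rid M" using M by (simp add: maxr_def)
  define My where "My = {b \<in> ga_carrier G. y \<star> b \<in> M}"
  have yax: "y \<star> (b \<star> x) \<in> M" if "y \<star> b \<in> M" for b x
    using rid_mult[OF Mr that, of x] by simp
  have Myr: "rid My"
    unfolding rid_def My_def using yax
    by (auto simp: add_right minus_right intro: rid_add[OF Mr] rid_uminus[OF Mr] rid_zero[OF Mr] rid_mult[OF Mr])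
  show ?thesis
  proof (cases "My = ga_carrier G")
    case True
    then show ?thesis using a J_mem My_def by blast
  next
    case False
    have "maxr My"
      unfolding maxr_def
    proof (intro conjI allI impI Myr False)
      fix N assume N: "rid N \<and> My \<subseteq> N"
      show "N = My \<or> N = ga_carrier G"
      proof (cases "N \<subseteq> My")
        case True then show ?thesis using N by blast
      next
        case False
        then obtain n where n: "n \<in> N" "n \<notin> My" by blast
        have nA: "n \<in> ga_carrier G" using n N rid_mem by blast
        have ynM: "y \<star> n \<notin> M" using n nA My_def by blast
        define S where "S = ssum M (prin (y \<star> n))"
        have Sr: "rid S" unfolding S_def by (rule rid_ssum[OF Mr rid_prin])
        have MS: "M \<subseteq> S" unfolding S_def by (rule ssum_left[OF rid_prin])
        have "y \<star> n \<in> S" unfolding S_def using ssum_right[OF Mr] prin_self[OF mult_carrier] by blast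
        then have "S \<noteq> M" using ynM by blast
        then have SA: "S = ga_carrier G" using M Sr MS unfolding maxr_def by blast
        have "ga_carrier G \<subseteq> N"
        proof
          fix b :: "'a \<Rightarrow> 'k" assume b: "b \<in> ga_carrier G"
          then have "y \<star> b \<in> S" using SA by simp
          then obtain m c where mc: "y \<star> b = m + (y \<star> n) \<star> c" "m \<in> M" "c \<in> ga_carrier G"
            unfolding S_def ssum_def prin_def by blast
          have "y \<star> (b - n \<star> c) = m" using mc(1) by (simp add: diff_right)
          moreover have "b - n \<star> c \<in> ga_carrier G" using b by (intro carr_diff mult_carrier)
          ultimately have "b - n \<star> c \<in> My" using mc(2) unfolding My_def by simp
          then have "b - n \<star> c \<in> N" using N by blast
          moreover have "n \<star> c \<in> N" using N n(1) rid_mult by blast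
          ultimately have "(b - n \<star> c) + n \<star> c \<in> N" using N rid_add by blast
          then show "b \<in> N" by simp
        qed
        then show ?thesis using N rid_sub by blast
      qed
    qed
    then have "a \<in> My" using a J_mem by blast
    then show ?thesis by (simp add: My_def)
  qed
qed

lemma J_left:
  fixes a y :: "'a \<Rightarrow> 'k::field"
  assumes a: "a \<in> ga_jacobson G"
  shows "y \<star> a \<in> ga_jacobson G"
proof -
  have aA: "a \<in> ga_carrier G" using a J_mem by blast
  have "(e1 \<star> y) \<star> a = e1 \<star> (y \<star> a)" by (rule assoc)
  also have "\<dots> = y \<star> a" by (rule e1_left[OF mult_carrier])
  finally have eq: "(e1 \<star> y) \<star> a = y \<star> a" .
  have "(e1 \<star> y) \<star> a \<in> M" if "maxr M" for M
    using J_left_aux[OF a mult_carrier that] .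
  then show ?thesis unfolding J_mem using eq by auto
qed

end

context GA begin

lemma fin_A: "finite (ga_carrier G :: ('a \<Rightarrow> 'k::{field,finite}) set)"
proof -
  let ?h = "\<lambda>(f::'a \<Rightarrow> 'k) x. if x \<in> carrier G then f x else 0"
  have "ga_carrier G \<subseteq> ?h ` (carrier G \<rightarrow>\<^sub>E (UNIV::'k set))"
  proof
    fix a :: "'a \<Rightarrow> 'k" assume a: "a \<in> ga_carrier G"
    have "a = ?h (restrict a (carrier G))" using a by (auto simp: ga_carrier_def fun_eq_iff)
    moreover have "restrict a (carrier G) \<in> carrier G \<rightarrow>\<^sub>E (UNIV::'k set)" by simp
    ultimately show "a \<in> ?h ` (carrier G \<rightarrow>\<^sub>E (UNIV::'k set))" by blast
  qed
  moreover have "finite (?h ` (carrier G \<rightarrow>\<^sub>E (UNIV::'k set)))"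
    using fin by (intro finite_imageI finite_PiE) auto
  ultimately show ?thesis by (rule finite_subset)
qed

lemma fin_sub: "S \<subseteq> ga_carrier G \<Longrightarrow> finite (S :: ('a \<Rightarrow> 'k::{field,finite}) set)"
  using fin_A finite_subset by blast

lemma ex_minimal:
  fixes N :: "('a \<Rightarrow> 'k::{field,finite}) set"
  assumes "rid N" "ga_jacobson G \<subseteq> N" "\<not> N \<subseteq> ga_jacobson G"
  shows "\<exists>L. rid L \<and> ga_jacobson G \<subseteq> L \<and> \<not> L \<subseteq> ga_jacobson G \<and> L \<subseteq> N \<and>
     (\<forall>L'. rid L' \<and> ga_jacobson G \<subseteq> L' \<and> \<not> L' \<subseteq> ga_jacobson G \<and> L' \<subseteq> L \<longrightarrow> L' = L)"
proof -
  define P where "P = (\<lambda>L::('a \<Rightarrow> 'k) set. rid L \<and> ga_jacobson G \<subseteq> L \<and> \<not> L \<subseteq> ga_jacobson G \<and> L \<subseteq> N)"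
  have "P N" using assms by (simp add: P_def)
  then obtain L where L: "P L" and Lmin: "\<forall>L'. P L' \<longrightarrow> card L \<le> card L'"
    using ex_has_least_nat[of P N card] by blast
  have "L' = L" if "rid L' \<and> ga_jacobson G \<subseteq> L' \<and> \<not> L' \<subseteq> ga_jacobson G \<and> L' \<subseteq> L" for L'
  proof -
    have "P L'" using that L by (auto simp: P_def)
    then have "card L \<le> card L'" using Lmin by blast
    moreover have "finite L" using L fin_sub rid_sub by (auto simp: P_def)
    ultimately show ?thesis using that card_seteq by blast
  qed
  then show ?thesis using L unfolding P_def by blast
qed

lemma ex_compl:
  fixes L :: "('a \<Rightarrow> 'k::{field,finite}) set"
  assumes L: "rid L" "ga_jacobson G \<subseteq> L"
  shows "\<exists>N. rid N \<and> ga_jacobson G \<subseteq> N \<and> (\<forall>x\<in>ga_carrier G. \<exists>y\<in>L. \<exists>z\<in>N. x = y + z) \<and> L \<inter> N \<subseteq> ga_jacobson G"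
proof -
  define P where "P = (\<lambda>N::('a \<Rightarrow> 'k) set. rid N \<and> ga_jacobson G \<subseteq> N \<and> (\<forall>x\<in>ga_carrier G. \<exists>y\<in>L. \<exists>z\<in>N. x = y + z))"
  have "P (ga_carrier G)"
    unfolding P_def
  proof (intro conjI ballI rid_A)
    show "ga_jacobson G \<subseteq> (ga_carrier G :: ('a \<Rightarrow> 'k) set)" using rid_sub[OF J_rid] .
    fix x :: "'a \<Rightarrow> 'k" assume x: "x \<in> ga_carrier G"
    have "x = 0 + x" by simp
    then show "\<exists>y\<in>L. \<exists>z\<in>ga_carrier G. x = y + z" using rid_zero[OF L(1)] x by blast
  qed
  then obtain N where N: "P N" and Nmin: "\<forall>N'. P N' \<longrightarrow> card (L \<inter> N) \<le> card (L \<inter> N')"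
    using ex_has_least_nat[of P "ga_carrier G" "\<lambda>N. card (L \<inter> N)"] by blast
  have "L \<inter> N \<subseteq> ga_jacobson G"
  proof (rule ccontr)
    assume "\<not> L \<inter> N \<subseteq> ga_jacobson G"
    then obtain x where x: "x \<in> L" "x \<in> N" "x \<notin> ga_jacobson G" by blast
    have xA: "x \<in> ga_carrier G" using x L rid_mem by blast
    obtain M where M: "maxr M" "x \<notin> M" using x(3) xA J_mem by blast
    have Mr: "rid M" using M by (simp add: maxr_def)
    have Nr: "rid N" using N by (simp add: P_def)
    define N' where "N' = N \<inter> M"
    define S where "S = ssum M (L \<inter> N)"
    have Sr: "rid S" unfolding S_def by (rule rid_ssum[OF Mr rid_inter[OF L(1) Nr]])
    have MS: "M \<subseteq> S" unfolding S_def by (rule ssum_left[OF rid_inter[OF L(1) Nr]])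
    have "x \<in> S" unfolding S_def using ssum_right[OF Mr] x by blast
    then have "S \<noteq> M" using M(2) by blast
    then have SA: "S = ga_carrier G" using M Sr MS unfolding maxr_def by blast
    have "P N'"
      unfolding P_def
    proof (intro conjI ballI)
      show "rid N'" unfolding N'_def by (rule rid_inter[OF Nr Mr])
      show "ga_jacobson G \<subseteq> N'" unfolding N'_def using N J_max[OF M(1)] by (auto simp: P_def)
      fix a :: "'a \<Rightarrow> 'k" assume a: "a \<in> ga_carrier G"
      then obtain l n where ln: "l \<in> L" "n \<in> N" "a = l + n" using N by (auto simp: P_def)
      have "n \<in> S" using SA rid_mem[OF Nr ln(2)] by simp
      then obtain m w where mw: "n = m + w" "m \<in> M" "w \<in> L \<inter> N" unfolding S_def ssum_def by blast
      have "m = n - w" using mw(1) by simp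
      then have "m \<in> N" using rid_diff[OF Nr ln(2)] mw(3) by blast
      then have "m \<in> N'" using mw(2) by (simp add: N'_def)
      moreover have "l + w \<in> L" using rid_add[OF L(1) ln(1)] mw(3) by blast
      moreover have "a = (l + w) + m" using ln(3) mw(1) by (simp add: algebra_simps)
      ultimately show "\<exists>y\<in>L. \<exists>z\<in>N'. a = y + z" by blast
    qed
    then have c1: "card (L \<inter> N) \<le> card (L \<inter> N')" using Nmin by blast
    have "L \<inter> N' \<subset> L \<inter> N" using x M(2) by (auto simp: N'_def)
    moreover have "finite (L \<inter> N)" using L(1) rid_sub fin_sub by blast
    ultimately have "card (L \<inter> N') < card (L \<inter> N)" using psubset_card_mono by blast
    then show False using c1 by linarith
  qed
  then show ?thesis using N by (auto simp: P_def)
qed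

end

context GA begin

abbreviation JJ :: "('a \<Rightarrow> 'k::field) set" where "JJ \<equiv> ga_jacobson G"

lemma J_A: "x \<in> JJ \<Longrightarrow> x \<in> ga_carrier G" using rid_mem[OF J_rid] by blast
lemma J_zero: "0 \<in> JJ" by (rule rid_zero[OF J_rid])
lemma J_add: "a \<in> JJ \<Longrightarrow> b \<in> JJ \<Longrightarrow> a + b \<in> JJ" by (rule rid_add[OF J_rid])
lemma J_diff: "a \<in> JJ \<Longrightarrow> b \<in> JJ \<Longrightarrow> a - b \<in> JJ" by (rule rid_diff[OF J_rid])
lemma J_uminus: "a \<in> JJ \<Longrightarrow> - a \<in> JJ" by (rule rid_uminus[OF J_rid])
lemma J_right: "a \<in> JJ \<Longrightarrow> a \<star> x \<in> JJ" by (rule rid_mult[OF J_rid])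
lemma J_sum: "(\<And>i. i \<in> S \<Longrightarrow> f i \<in> JJ) \<Longrightarrow> (\<Sum>i\<in>S. f i) \<in> JJ" by (rule rid_sum[OF J_rid])
lemma J_uminus_iff: "- a \<in> JJ \<longleftrightarrow> a \<in> JJ"
  using J_uminus[of a] J_uminus[of "-a"] by auto

lemma idem:
  fixes N :: "('a \<Rightarrow> 'k::{field,finite}) set"
  assumes "rid N" "JJ \<subseteq> N" "f \<in> N" "\<forall>x\<in>N. f \<star> x - x \<in> JJ"
  shows "\<exists>E. finite E \<and> E \<subseteq> N \<and> (\<Sum>e\<in>E. e) - f \<in> JJ \<and> (\<forall>e\<in>E. \<forall>e'\<in>E. e \<noteq> e' \<longrightarrow> e \<star> e' \<in> JJ)
     \<and> (\<forall>e\<in>E. e \<star> e - e \<in> JJ) \<and> (\<forall>e\<in>E. \<forall>y\<in>ga_carrier G. e \<star> y \<notin> JJ \<longrightarrow> (\<exists>b\<in>ga_carrier G. e \<star> (y \<star> b) - e \<in> JJ))"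
  using assms
proof (induction "card N" arbitrary: N f rule: less_induct)
  case less
  note Nr = less.prems(1) and JN = less.prems(2) and fN = less.prems(3) and fid = less.prems(4)
  show ?case
  proof (cases "N \<subseteq> JJ")
    case True
    have "(\<Sum>e\<in>{}. e) - f \<in> JJ" using True fN J_uminus by auto
    then show ?thesis by (intro exI[of _ "{}"]) auto
  next
    case False
    obtain L where L: "rid L" "JJ \<subseteq> L" "\<not> L \<subseteq> JJ" "L \<subseteq> N"
      and Lmin: "\<forall>L'. rid L' \<and> JJ \<subseteq> L' \<and> \<not> L' \<subseteq> JJ \<and> L' \<subseteq> L \<longrightarrow> L' = L"
      using ex_minimal[OF Nr JN False] by blast
    obtain L' where L': "rid L'" "JJ \<subseteq> L'" and dec: "\<forall>x\<in>ga_carrier G. \<exists>y\<in>L. \<exists>z\<in>L'. x = y + z"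
      and LL': "L \<inter> L' \<subseteq> JJ"
      using ex_compl[OF L(1,2)] by blast
    define N' where "N' = N \<inter> L'"
    have fA: "f \<in> ga_carrier G" using rid_mem[OF Nr fN] .
    then obtain e f0 where ef: "e \<in> L" "f0 \<in> L'" "f = e + f0" using dec by blast
    have eN: "e \<in> N" using ef L(4) by blast
    have "f0 = f - e" using ef(3) by simp
    then have "f0 \<in> N" using rid_diff[OF Nr fN eN] by simp
    then have f0N': "f0 \<in> N'" using ef(2) by (simp add: N'_def)
    have fx: "f \<star> x = e \<star> x + f0 \<star> x" for x using ef(3) by (simp add: add_left)
    have eL: "e \<star> x - x \<in> JJ \<and> f0 \<star> x \<in> JJ" if x: "x \<in> L" for x
    proof -
      have xN: "x \<in> N" using x L(4) by blast
      have h1: "f \<star> x - x \<in> JJ" using fid xN by blast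
      have "f0 \<star> x \<in> L'" using rid_mult[OF L'(1) ef(2)] .
      moreover have "f0 \<star> x = (f \<star> x - x) + (x - e \<star> x)" using fx[of x] by simp
      moreover have "(f \<star> x - x) + (x - e \<star> x) \<in> L"
        using h1 L(2) rid_add[OF L(1)] rid_diff[OF L(1) x rid_mult[OF L(1) ef(1)]] by blast
      ultimately have f0x: "f0 \<star> x \<in> JJ" using LL' by auto
      have eq: "e \<star> x - x = (f \<star> x - x) - f0 \<star> x" using fx[of x] by simp
      have "e \<star> x - x \<in> JJ" unfolding eq by (rule J_diff[OF h1 f0x])
      then show ?thesis using f0x by blast
    qed
    have eN': "e \<star> x \<in> JJ \<and> f0 \<star> x - x \<in> JJ" if x: "x \<in> N'" for x
    proof -
      have xN: "x \<in> N" "x \<in> L'" using x by (auto simp: N'_def)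
      have h1: "f \<star> x - x \<in> JJ" using fid xN by blast
      have "e \<star> x \<in> L" using rid_mult[OF L(1) ef(1)] .
      moreover have "e \<star> x = (f \<star> x - x) + (x - f0 \<star> x)" using fx[of x] by simp
      moreover have "(f \<star> x - x) + (x - f0 \<star> x) \<in> L'"
        using h1 L'(2) rid_add[OF L'(1)] rid_diff[OF L'(1) xN(2) rid_mult[OF L'(1) ef(2)]] by blast
      ultimately have ex: "e \<star> x \<in> JJ" using LL' by auto
      have eq: "f0 \<star> x - x = (f \<star> x - x) - e \<star> x" using fx[of x] by simp
      have "f0 \<star> x - x \<in> JJ" unfolding eq by (rule J_diff[OF h1 ex])
      then show ?thesis using ex by blast
    qed
    obtain z where z: "z \<in> L" "z \<notin> JJ" using L(3) by blast
    have zN': "z \<notin> N'" using z LL' by (auto simp: N'_def)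
    have N'N: "N' \<subset> N" using z zN' L(4) by (auto simp: N'_def)
    have finN: "finite N" using fin_sub rid_sub[OF Nr] by blast
    have card_lt: "card N' < card N" using psubset_card_mono[OF finN N'N] .
    have N'r: "rid N'" unfolding N'_def by (rule rid_inter[OF Nr L'(1)])
    have JN': "JJ \<subseteq> N'" using JN L'(2) by (auto simp: N'_def)
    have f0id: "\<forall>x\<in>N'. f0 \<star> x - x \<in> JJ" using eN' by blast
    obtain E' where E': "finite E'" "E' \<subseteq> N'" "(\<Sum>e\<in>E'. e) - f0 \<in> JJ"
      "\<forall>e\<in>E'. \<forall>e'\<in>E'. e \<noteq> e' \<longrightarrow> e \<star> e' \<in> JJ" "\<forall>e\<in>E'. e \<star> e - e \<in> JJ"
      "\<forall>e\<in>E'. \<forall>y\<in>ga_carrier G. e \<star> y \<notin> JJ \<longrightarrow> (\<exists>b\<in>ga_carrier G. e \<star> (y \<star> b) - e \<in> JJ)"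
      using less.hyps[OF card_lt N'r JN' f0N' f0id] by blast
    have eJ: "e \<notin> JJ"
    proof
      assume eJ: "e \<in> JJ"
      have "L \<subseteq> JJ"
      proof
        fix x assume x: "x \<in> L"
        have "x = e \<star> x - (e \<star> x - x)" by simp
        moreover have "e \<star> x - (e \<star> x - x) \<in> JJ" using J_diff[OF J_right[OF eJ]] eL[OF x] by blast
        ultimately show "x \<in> JJ" by simp
      qed
      then show False using L(3) by blast
    qed
    have eE': "e \<notin> E'"
    proof
      assume "e \<in> E'"
      then have "e \<in> L'" using E'(2) by (auto simp: N'_def)
      then show False using eJ ef(1) LL' by blast
    qed
    have e'e: "e' \<star> e \<in> JJ" if e': "e' \<in> E'" for e'
    proof -
      have s1: "(\<Sum>x\<in>E'. e' \<star> x) = e' \<star> e' + (\<Sum>x\<in>E' - {e'}. e' \<star> x)"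
        using sum.remove[OF E'(1) e'] .
      have s2: "(\<Sum>x\<in>E' - {e'}. e' \<star> x) \<in> JJ"
        using E'(4) e' by (intro J_sum) auto
      have "e' \<star> (\<Sum>x\<in>E'. x) - e' = (e' \<star> e' - e') + (\<Sum>x\<in>E' - {e'}. e' \<star> x)"
        using s1 by (simp add: sum_right)
      moreover have "(e' \<star> e' - e') + (\<Sum>x\<in>E' - {e'}. e' \<star> x) \<in> JJ"
        using J_add[OF _ s2] E'(5) e' by blast
      ultimately have t1: "e' \<star> (\<Sum>x\<in>E'. x) - e' \<in> JJ" by (simp add: diff_add_eq)
      have t2: "e' \<star> (f0 - (\<Sum>x\<in>E'. x)) \<in> JJ"
        using J_left J_uminus E'(3) by (metis minus_diff_eq)
      have eq3: "e' \<star> f0 - e' = e' \<star> (f0 - (\<Sum>x\<in>E'. x)) + (e' \<star> (\<Sum>x\<in>E'. x) - e')"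
        by (simp add: diff_right algebra_simps)
      have t3: "e' \<star> f0 - e' \<in> JJ" unfolding eq3 by (rule J_add[OF t2 t1])
      have t4: "e' \<star> (f0 \<star> e) \<in> JJ" using J_left eL[OF ef(1)] by blast
      have t5: "(e' \<star> f0 - e') \<star> e \<in> JJ" using J_right[OF t3] .
      have eq4: "e' \<star> e = e' \<star> (f0 \<star> e) - (e' \<star> f0 - e') \<star> e"
        by (simp add: diff_left)
      show ?thesis unfolding eq4 by (rule J_diff[OF t4 t5])
    qed
    have emin: "\<exists>b\<in>ga_carrier G. e \<star> (y \<star> b) - e \<in> JJ" if y: "y \<in> ga_carrier G" and ey: "e \<star> y \<notin> JJ" for y
    proof -
      define S where "S = ssum JJ (prin (e \<star> y))"
      have Sr: "rid S" unfolding S_def by (rule rid_ssum[OF J_rid rid_prin])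
      have JS: "JJ \<subseteq> S" unfolding S_def by (rule ssum_left[OF rid_prin])
      have "e \<star> y \<in> S" unfolding S_def using ssum_right[OF J_rid] prin_self[OF mult_carrier] by blast
      then have nS: "\<not> S \<subseteq> JJ" using ey by blast
      have SL: "S \<subseteq> L"
      proof
        fix s assume "s \<in> S"
        then obtain j b where jb: "s = j + (e \<star> y) \<star> b" "j \<in> JJ" "b \<in> ga_carrier G"
          unfolding S_def ssum_def prin_def by blast
        have "(e \<star> y) \<star> b \<in> L" using rid_mult[OF L(1) rid_mult[OF L(1) ef(1)]] .
        then show "s \<in> L" using jb L(2) rid_add[OF L(1)] by blast
      qed
      have "S = L" using Lmin Sr JS nS SL by blast
      then have "e \<in> S" using ef(1) by simp
      then obtain j w where jw: "e = j + w" "j \<in> JJ" "w \<in> prin (e \<star> y)"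
        unfolding S_def ssum_def by blast
      then obtain b where wb: "w = (e \<star> y) \<star> b" "b \<in> ga_carrier G"
        unfolding prin_def by blast
      have jb: "e = j + (e \<star> y) \<star> b" "j \<in> JJ" "b \<in> ga_carrier G" using jw wb by auto
      have "e \<star> (y \<star> b) - e = - j" using jb(1) by (simp add: algebra_simps)
      moreover have "- j \<in> JJ" by (rule J_uminus[OF jb(2)])
      ultimately have "e \<star> (y \<star> b) - e \<in> JJ" by simp
      then show ?thesis using jb(3) by blast
    qed
    show ?thesis
    proof (intro exI[of _ "insert e E'"] conjI ballI impI)
      show "finite (insert e E')" using E'(1) by simp
      show "insert e E' \<subseteq> N" using eN E'(2) by (auto simp: N'_def)
      have "(\<Sum>x\<in>insert e E'. x) - f = (\<Sum>x\<in>E'. x) - f0"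
        using E'(1) eE' ef(3) by simp
      then show "(\<Sum>x\<in>insert e E'. x) - f \<in> JJ" using E'(3) by simp
    next
      fix a b assume a: "a \<in> insert e E'" and b: "b \<in> insert e E'" and ab: "a \<noteq> b"
      show "a \<star> b \<in> JJ"
      proof (cases "a = e")
        case True
        then have "b \<in> E'" using b ab by auto
        then have "b \<in> N'" using E'(2) by blast
        then show ?thesis using True eN' by blast
      next
        case False
        then have aE: "a \<in> E'" using a by auto
        show ?thesis
        proof (cases "b = e")
          case True then show ?thesis using e'e aE by simp
        next
          case False then show ?thesis using aE b ab E'(4) by auto
        qed
      qed
    next
      fix a assume a: "a \<in> insert e E'"
      show "a \<star> a - a \<in> JJ"
      proof (cases "a = e")
        case True then show ?thesis using eL[OF ef(1)] by simp
      next
        case False then show ?thesis using a E'(5) by auto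
      qed
    next
      fix a y assume a: "a \<in> insert e E'" and y: "y \<in> ga_carrier G" and ay: "a \<star> y \<notin> JJ"
      show "\<exists>b\<in>ga_carrier G. a \<star> (y \<star> b) - a \<in> JJ"
      proof (cases "a = e")
        case True then show ?thesis using emin y ay by simp
      next
        case False then show ?thesis using a y ay E'(6) by auto
      qed
    qed
  qed
qed

end

context GA begin

lemma J_frob:
  "\<exists>l. ga_linear G l \<and> (\<forall>c\<in>(JJ :: ('a \<Rightarrow> 'k::{field,finite}) set). l c = 0) \<and>
      (\<forall>L. rid L \<and> JJ \<subseteq> L \<and> (\<forall>a\<in>L. l a = 0) \<longrightarrow> L = JJ)"
proof -
  have JA: "(JJ :: ('a \<Rightarrow> 'k) set) \<subseteq> ga_carrier G" using rid_sub[OF J_rid] .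
  have e1id: "\<forall>x\<in>ga_carrier G. e1 \<star> x - x \<in> (JJ :: ('a \<Rightarrow> 'k) set)"
    by (simp add: e1_left J_zero)
  obtain E :: "('a \<Rightarrow> 'k) set" where E: "finite E" "(\<Sum>e\<in>E. e) - e1 \<in> JJ"
    "\<forall>e\<in>E. \<forall>e'\<in>E. e \<noteq> e' \<longrightarrow> e \<star> e' \<in> JJ" "\<forall>e\<in>E. e \<star> e - e \<in> JJ"
    "\<forall>e\<in>E. \<forall>y\<in>ga_carrier G. e \<star> y \<notin> JJ \<longrightarrow> (\<exists>b\<in>ga_carrier G. e \<star> (y \<star> b) - e \<in> JJ)"
    using idem[OF rid_A JA carr_e1 e1id] by blast
  define P where "P = (\<lambda>(e::'a \<Rightarrow> 'k) (lam :: ('a \<Rightarrow> 'k) \<Rightarrow> 'k).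
     (\<forall>x y. lam (x + y) = lam x + lam y) \<and> (\<forall>c x. lam (fsc c x) = c * lam x) \<and>
     (\<forall>x\<in>JJ. lam x = 0) \<and> (e \<notin> JJ \<longrightarrow> lam e = 1))"
  have ex: "\<exists>lam. P e lam" for e
  proof (cases "e \<in> JJ")
    case True
    then show ?thesis by (intro exI[of _ "\<lambda>_. 0"]) (simp add: P_def)
  next
    case False
    have "\<exists>lam. (\<forall>x y. lam (x+y) = lam x + lam y) \<and> (\<forall>c x. lam (fsc c x) = c * lam x)
     \<and> (\<forall>x\<in>JJ. lam x = 0) \<and> lam e = 1"
      by (rule functional_exists) (use False J_zero J_add rid_fsc[OF J_rid] in auto)
    then show ?thesis unfolding P_def by blast
  qed
  have "\<exists>lam. \<forall>e. P e (lam e)" by (rule choice) (use ex in blast)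
  then obtain lam where lam0: "\<forall>e. P e (lam e)" by blast
  have lam: "P e (lam e)" for e using lam0 by blast
  have lam_add: "lam e (x + y) = lam e x + lam e y" for e x y using lam[of e] by (simp add: P_def)
  have lam_fsc: "lam e (fsc c x) = c * lam e x" for e c x using lam[of e] by (simp add: P_def)
  have lam_J: "x \<in> JJ \<Longrightarrow> lam e x = 0" for e x using lam[of e] by (simp add: P_def)
  have lam_e: "e \<notin> JJ \<Longrightarrow> lam e e = 1" for e using lam[of e] by (simp add: P_def)
  define l where "l = (\<lambda>x. \<Sum>e\<in>E. lam e (e \<star> (x \<star> e)))"
  have lin: "ga_linear G l"
    unfolding ga_linear_def
  proof (intro conjI ballI allI)
    fix a b :: "'a \<Rightarrow> 'k"
    have "(\<lambda>g. a g + b g) = a + b" by (simp add: plus_fun_def)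
    then show "l (\<lambda>g. a g + b g) = l a + l b"
      unfolding l_def by (simp add: add_left add_right lam_add sum.distrib)
  next
    fix c and a :: "'a \<Rightarrow> 'k"
    have "(\<lambda>g. c * a g) = fsc c a" by (simp add: fsc_def)
    then show "l (\<lambda>g. c * a g) = c * l a"
      unfolding l_def by (simp add: fsc_left fsc_right lam_fsc sum_distrib_left)
  qed
  have lJ: "\<forall>c\<in>JJ. l c = 0"
  proof
    fix c :: "'a \<Rightarrow> 'k" assume c: "c \<in> JJ"
    have "e \<star> (c \<star> e) \<in> JJ" for e using J_left[OF J_right[OF c]] .
    then show "l c = 0" unfolding l_def by (simp add: lam_J)
  qed
  have frob: "L = JJ" if L: "rid L" "JJ \<subseteq> L" "\<forall>a\<in>L. l a = 0" for L
  proof (rule ccontr)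
    assume "L \<noteq> JJ"
    then obtain r where r: "r \<in> L" "r \<notin> JJ" using L(2) by blast
    have rA: "r \<in> ga_carrier G" using rid_mem[OF L(1) r(1)] .
    define s where "s = (\<Sum>e\<in>E. e)"
    define j0 where "j0 = s - e1"
    have j0: "j0 \<in> JJ" using E(2) by (simp add: j0_def s_def)
    have s_eq: "s = e1 + j0" by (simp add: j0_def)
    have "s \<star> (r \<star> s) = e1 \<star> (r \<star> e1) + (e1 \<star> (r \<star> j0) + j0 \<star> (r \<star> e1) + j0 \<star> (r \<star> j0))"
      unfolding s_eq by (simp add: add_left add_right algebra_simps)
    moreover have "e1 \<star> (r \<star> e1) = r" using rA by (simp add: e1_left e1_right)
    moreover have "e1 \<star> (r \<star> j0) + j0 \<star> (r \<star> e1) + j0 \<star> (r \<star> j0) \<in> JJ"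
      using j0 by (intro J_add J_left J_right)
    ultimately have srs: "s \<star> (r \<star> s) - r \<in> JJ" by simp
    have ss0: "s \<star> (r \<star> s) = (\<Sum>e'\<in>E. \<Sum>e\<in>E. e \<star> (r \<star> e'))"
      unfolding s_def by (simp add: sum_left sum_right)
    have ss: "s \<star> (r \<star> s) = (\<Sum>e\<in>E. \<Sum>e'\<in>E. e \<star> (r \<star> e'))"
      unfolding ss0 by (rule sum.swap)
    have "\<exists>e\<in>E. \<exists>e'\<in>E. e \<star> (r \<star> e') \<notin> JJ"
    proof (rule ccontr)
      assume "\<not> ?thesis"
      then have "s \<star> (r \<star> s) \<in> JJ" unfolding ss by (intro J_sum) blast
      then have "s \<star> (r \<star> s) - (s \<star> (r \<star> s) - r) \<in> JJ" using J_diff srs by blast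
      then show False using r(2) by simp
    qed
    then obtain e e' where ee: "e \<in> E" "e' \<in> E" "e \<star> (r \<star> e') \<notin> JJ" by blast
    have eJ: "e \<notin> JJ" using ee(3) J_right by auto
    obtain b' where b': "b' \<in> ga_carrier G" "e \<star> ((r \<star> e') \<star> b') - e \<in> JJ"
      using E(5) ee mult_carrier by blast
    define X where "X = e \<star> (r \<star> (e' \<star> b'))"
    have X: "X - e \<in> JJ" using b'(2) by (simp add: X_def)
    define b where "b = e' \<star> (b' \<star> e)"
    have rbL: "r \<star> b \<in> L" using rid_mult[OF L(1) r(1)] .
    have term_ne: "lam k (k \<star> ((r \<star> b) \<star> k)) = 0" if k: "k \<in> E" "k \<noteq> e" for k
    proof -
      have "e \<noteq> k" using k(2) by simp
      then have ek: "e \<star> k \<in> JJ" using E(3) ee(1) k(1) by simp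
      have "(k \<star> (r \<star> (e' \<star> b'))) \<star> (e \<star> k) \<in> JJ" using J_left[OF ek] .
      then have "k \<star> ((r \<star> b) \<star> k) \<in> JJ" by (simp add: b_def)
      then show ?thesis by (rule lam_J)
    qed
    have term_e: "lam e (e \<star> ((r \<star> b) \<star> e)) = 1"
    proof -
      have T: "e \<star> ((r \<star> b) \<star> e) = X \<star> (e \<star> e)" by (simp add: X_def b_def)
      have ee2: "e \<star> e - e \<in> JJ" using E(4) ee(1) by blast
      have eqT: "X \<star> (e \<star> e) - e = X \<star> (e \<star> e - e) + (X - e) \<star> e + (e \<star> e - e)"
        by (simp add: diff_left diff_right algebra_simps)
      have "X \<star> (e \<star> e) - e \<in> JJ" unfolding eqT
        by (intro J_add J_left J_right ee2 X)
      then have "lam e (X \<star> (e \<star> e) - e) = 0" by (rule lam_J)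
      moreover have "lam e (X \<star> (e \<star> e)) = lam e (X \<star> (e \<star> e) - e) + lam e e"
        using lam_add[of e "X \<star> (e \<star> e) - e" e] by simp
      ultimately show ?thesis using T lam_e[OF eJ] by simp
    qed
    have "l (r \<star> b) = (\<Sum>k\<in>E. if k = e then 1 else 0)"
      unfolding l_def using term_ne term_e by (intro sum.cong) auto
    also have "\<dots> = 1" using E(1) ee(1) by simp
    finally have "l (r \<star> b) = 1" .
    then show False using L(3) rbL by simp
  qed
  show ?thesis using lin lJ frob by blast
qed

end

theorem mainTheorem8:
  fixes G :: "('g, 'b) monoid_scheme" and C :: "('g \<Rightarrow> 'k::{field,finite}) set"
  assumes "group G" and "finite (carrier G)"
    and "ga_ideal G C" and "frobenius_quotient G C"
  shows "checkable G C \<and> checkable G (ga_jacobson G :: ('g \<Rightarrow> 'k) set)"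
proof -
  interpret GA G using assms(1,2) by (simp add: GA_def GA_axioms_def)
  have C: "rid C" using assms(3) by (simp add: ga_ideal_def rid_iff)
  obtain l where l: "ga_linear G l" "\<forall>c\<in>C. l c = 0"
    "\<forall>L. ga_right_ideal G L \<and> C \<subseteq> L \<and> (\<forall>a\<in>L. l a = 0) \<longrightarrow> L = C"
    using assms(4) unfolding frobenius_quotient_def by blast
  have l3: "\<forall>L. rid L \<and> C \<subseteq> L \<and> (\<forall>a\<in>L. l a = 0) \<longrightarrow> L = C"
    using l(3) by (simp add: rid_iff)
  have 1: "checkable G C" by (rule checkable_of[OF C l(1) l(2) l3])
  obtain l' where l': "ga_linear G l'" "\<forall>c\<in>(ga_jacobson G :: ('g \<Rightarrow> 'k) set). l' c = 0"
    "\<forall>L. rid L \<and> ga_jacobson G \<subseteq> L \<and> (\<forall>a\<in>L. l' a = 0) \<longrightarrow> L = (ga_jacobson G :: ('g \<Rightarrow> 'k) set)"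
    using J_frob by blast
  have 2: "checkable G (ga_jacobson G :: ('g \<Rightarrow> 'k) set)"
    by (rule checkable_of[OF J_rid l'(1) l'(2) l'(3)])
  show ?thesis using 1 2 by simp
qed

end
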